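(* Let $G$ be a locally compact group, $p\in(1,\infty)$ and $(\pi,E)\in\mathrm{Rep}_p(G)$. Then $A_{p,\pi}=A_{p,\pi^\infty}$ (as normed spaces of functions on $G$).
   Context: A representation $(\pi,E)$ of $G$ is a strongly continuous homomorphism from $G$ into the invertible isometries of a Banach space $E$. A $QSL_p$-space is a Banach space isometric to a quotient of a closed subspace of an $L_p$-space; $\mathrm{Rep}_p(G)$ is the class of representations on $QSL_p$-spaces. $L_p(E)$ is the space of sequences $(\xi_n)_n$ in $E$ with $(\sum_n\|\xi_n\|^p)^{1/p}<\infty$ (its dual is $L_{p'}(E^* )$, $1/p+1/p'=1$), and $\pi^\infty(x)(\xi_n)_n=(\pi(x)\xi_n)_n$. For a representation $(\rho,F)$, $A_{p,\rho}$ is the space of functions $u(x)=\sum_n\langle\rho(x)\xi_n,\eta_n\rangle$ with $\xi_n\in F$, $\eta_n\in F^*$, $\sum_n\|\xi_n\|\|\eta_n\|<\infty$, with norm the infimum of $\sum_n\|\xi_n\|\|\eta_n\|$ over all such expressions. *)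

theory Defs
  imports "HOL-Analysis.Analysis" "HOL-Algebra.Group"
begin

definition lc_group :: "('g, 'b) monoid_scheme \<Rightarrow> 'g topology \<Rightarrow> bool" where
  "lc_group G T \<longleftrightarrow> group G \<and> topspace T = carrier G \<and> Hausdorff_space T
     \<and> locally_compact_space T
     \<and> continuous_map (prod_topology T T) T (\<lambda>(x, y). x \<otimes>\<^bsub>G\<^esub> y)
     \<and> continuous_map T T (\<lambda>x. inv\<^bsub>G\<^esub> x)"

section \<open>Complex Banach spaces: a real Banach space type with a compatible complex scalar multiplication\<close>

definition complex_banach :: "(complex \<Rightarrow> 'e::banach \<Rightarrow> 'e) \<Rightarrow> bool" where
  "complex_banach smul \<longleftrightarrow> Vector_Spaces.vector_space smul
     \<and> (\<forall>r v. smul (complex_of_real r) v = scaleR r v)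
     \<and> (\<forall>c v. norm (smul c v) = cmod c * norm v)"

definition Lp_funs :: "'m measure \<Rightarrow> real \<Rightarrow> ('m \<Rightarrow> complex) set" where
  "Lp_funs M p = {f. f \<in> borel_measurable M \<and> integrable M (\<lambda>x. cmod (f x) powr p)}"

definition Lp_norm :: "'m measure \<Rightarrow> real \<Rightarrow> ('m \<Rightarrow> complex) \<Rightarrow> real" where
  "Lp_norm M p f = (\<integral>x. cmod (f x) powr p \<partial>M) powr (1 / p)"

definition Lp_closed_subspace :: "'m measure \<Rightarrow> real \<Rightarrow> ('m \<Rightarrow> complex) set \<Rightarrow> bool" where
  "Lp_closed_subspace M p S \<longleftrightarrow> S \<subseteq> Lp_funs M p \<and> (\<lambda>x. 0) \<in> S
     \<and> (\<forall>f\<in>S. \<forall>g\<in>S. (\<lambda>x. f x + g x) \<in> S)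
     \<and> (\<forall>c. \<forall>f\<in>S. (\<lambda>x. c * f x) \<in> S)
     \<and> (\<forall>f\<in>Lp_funs M p. (\<forall>e>0. \<exists>g\<in>S. Lp_norm M p (\<lambda>x. f x - g x) < e) \<longrightarrow> f \<in> S)"

(* E is isometrically isomorphic to S/T, S, T closed subspaces of L_p(M), T \<subseteq> S:
   Q : S \<rightarrow> E complex linear, onto, with \<parallel>Q f\<parallel> = dist_p(f, T) (the quotient norm). *)
definition QSLp_via :: "'m measure \<Rightarrow> real \<Rightarrow> (complex \<Rightarrow> 'e::banach \<Rightarrow> 'e) \<Rightarrow> bool" where
  "QSLp_via M p smul \<longleftrightarrow> (\<exists>S T (Q :: ('m \<Rightarrow> complex) \<Rightarrow> 'e).
     Lp_closed_subspace M p S \<and> Lp_closed_subspace M p T \<and> T \<subseteq> S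
     \<and> (\<forall>f\<in>S. \<forall>g\<in>S. Q (\<lambda>x. f x + g x) = Q f + Q g)
     \<and> (\<forall>c. \<forall>f\<in>S. Q (\<lambda>x. c * f x) = smul c (Q f))
     \<and> Q ` S = UNIV
     \<and> (\<forall>f\<in>S. norm (Q f) = Inf {Lp_norm M p (\<lambda>x. f x - g x) | g. g \<in> T}))"

(* E is a QSL_p-space: quotient of a subspace of L_p(M) for some measure space M
   (the measure space's underlying type is given by the first argument) *)
definition QSLp_space :: "'m itself \<Rightarrow> real \<Rightarrow> (complex \<Rightarrow> 'e::banach \<Rightarrow> 'e) \<Rightarrow> bool" where
  "QSLp_space _ p smul \<longleftrightarrow> complex_banach smul \<and> (\<exists>M :: 'm measure. QSLp_via M p smul)"

definition isometric_rep ::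
  "('g, 'b) monoid_scheme \<Rightarrow> 'g topology \<Rightarrow> (complex \<Rightarrow> 'e::banach \<Rightarrow> 'e) \<Rightarrow> ('g \<Rightarrow> 'e \<Rightarrow> 'e) \<Rightarrow> bool" where
  "isometric_rep G T smul \<pi> \<longleftrightarrow>
     (\<forall>x\<in>carrier G. bij (\<pi> x)
        \<and> (\<forall>v w. \<pi> x (v + w) = \<pi> x v + \<pi> x w)
        \<and> (\<forall>c v. \<pi> x (smul c v) = smul c (\<pi> x v))
        \<and> (\<forall>v. norm (\<pi> x v) = norm v))
   \<and> (\<forall>x\<in>carrier G. \<forall>y\<in>carrier G. \<pi> (x \<otimes>\<^bsub>G\<^esub> y) = \<pi> x \<circ> \<pi> y)
   \<and> \<pi> \<one>\<^bsub>G\<^esub> = id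
   \<and> (\<forall>v. continuous_map T euclidean (\<lambda>x. \<pi> x v))"

definition cdual :: "'v set \<Rightarrow> ('v \<Rightarrow> real) \<Rightarrow> ('v \<Rightarrow> 'v \<Rightarrow> 'v) \<Rightarrow> (complex \<Rightarrow> 'v \<Rightarrow> 'v)
    \<Rightarrow> ('v \<Rightarrow> complex) set" where
  "cdual V N add smul = {\<eta>. (\<forall>u\<in>V. \<forall>w\<in>V. \<eta> (add u w) = \<eta> u + \<eta> w)
      \<and> (\<forall>c. \<forall>u\<in>V. \<eta> (smul c u) = c * \<eta> u)
      \<and> (\<exists>C. \<forall>u\<in>V. cmod (\<eta> u) \<le> C * N u)}"

definition dual_norm :: "'v set \<Rightarrow> ('v \<Rightarrow> real) \<Rightarrow> ('v \<Rightarrow> complex) \<Rightarrow> real" where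
  "dual_norm V N \<eta> = Sup {cmod (\<eta> u) | u. u \<in> V \<and> N u \<le> 1}"

definition coef_repr ::
  "('g, 'b) monoid_scheme \<Rightarrow> ('g \<Rightarrow> 'v \<Rightarrow> 'v) \<Rightarrow> 'v set \<Rightarrow> ('v \<Rightarrow> real)
    \<Rightarrow> ('v \<Rightarrow> 'v \<Rightarrow> 'v) \<Rightarrow> (complex \<Rightarrow> 'v \<Rightarrow> 'v) \<Rightarrow> ('g \<Rightarrow> complex)
    \<Rightarrow> (nat \<Rightarrow> 'v) \<Rightarrow> (nat \<Rightarrow> 'v \<Rightarrow> complex) \<Rightarrow> bool" where
  "coef_repr G \<rho> V N add smul u \<xi> \<eta> \<longleftrightarrow>
     (\<forall>n. \<xi> n \<in> V \<and> \<eta> n \<in> cdual V N add smul)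
     \<and> summable (\<lambda>n. N (\<xi> n) * dual_norm V N (\<eta> n))
     \<and> u = restrict (\<lambda>x. \<Sum>n. \<eta> n (\<rho> x (\<xi> n))) (carrier G)"

definition coef_space ::
  "('g, 'b) monoid_scheme \<Rightarrow> ('g \<Rightarrow> 'v \<Rightarrow> 'v) \<Rightarrow> 'v set \<Rightarrow> ('v \<Rightarrow> real)
    \<Rightarrow> ('v \<Rightarrow> 'v \<Rightarrow> 'v) \<Rightarrow> (complex \<Rightarrow> 'v \<Rightarrow> 'v) \<Rightarrow> ('g \<Rightarrow> complex) set" where
  "coef_space G \<rho> V N add smul = {u. \<exists>\<xi> \<eta>. coef_repr G \<rho> V N add smul u \<xi> \<eta>}"

definition coef_norm ::
  "('g, 'b) monoid_scheme \<Rightarrow> ('g \<Rightarrow> 'v \<Rightarrow> 'v) \<Rightarrow> 'v set \<Rightarrow> ('v \<Rightarrow> real)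
    \<Rightarrow> ('v \<Rightarrow> 'v \<Rightarrow> 'v) \<Rightarrow> (complex \<Rightarrow> 'v \<Rightarrow> 'v) \<Rightarrow> ('g \<Rightarrow> complex) \<Rightarrow> real" where
  "coef_norm G \<rho> V N add smul u =
     Inf {(\<Sum>n. N (\<xi> n) * dual_norm V N (\<eta> n)) | \<xi> \<eta>. coef_repr G \<rho> V N add smul u \<xi> \<eta>}"

section \<open>The space L_p(E) of p-summable sequences and the amplification \<pi>^\<infinity>\<close>

definition lp_seq :: "real \<Rightarrow> (nat \<Rightarrow> 'e::real_normed_vector) set" where
  "lp_seq p = {\<xi>. summable (\<lambda>n. norm (\<xi> n) powr p)}"

definition lp_seq_norm :: "real \<Rightarrow> (nat \<Rightarrow> 'e::real_normed_vector) \<Rightarrow> real" where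
  "lp_seq_norm p \<xi> = (\<Sum>n. norm (\<xi> n) powr p) powr (1 / p)"

definition seq_add :: "(nat \<Rightarrow> 'e::plus) \<Rightarrow> (nat \<Rightarrow> 'e) \<Rightarrow> nat \<Rightarrow> 'e" where
  "seq_add \<xi> \<zeta> = (\<lambda>n. \<xi> n + \<zeta> n)"

definition seq_smul :: "(complex \<Rightarrow> 'e \<Rightarrow> 'e) \<Rightarrow> complex \<Rightarrow> (nat \<Rightarrow> 'e) \<Rightarrow> nat \<Rightarrow> 'e" where
  "seq_smul smul c \<xi> = (\<lambda>n. smul c (\<xi> n))"

definition amplify :: "('g \<Rightarrow> 'e \<Rightarrow> 'e) \<Rightarrow> 'g \<Rightarrow> (nat \<Rightarrow> 'e) \<Rightarrow> nat \<Rightarrow> 'e" where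
  "amplify \<pi> x \<xi> = (\<lambda>n. \<pi> x (\<xi> n))"

end

theory Submission
  imports Defs
begin

definition ek :: "nat \<Rightarrow> 'e::zero \<Rightarrow> nat \<Rightarrow> 'e" where
  "ek k v = (\<lambda>j. if j = k then v else 0)"
definition trunc_seq :: "nat \<Rightarrow> (nat \<Rightarrow> 'e::zero) \<Rightarrow> nat \<Rightarrow> 'e" where
  "trunc_seq K z = (\<lambda>j. if j < K then z j else 0)"
definition tail_seq :: "nat \<Rightarrow> (nat \<Rightarrow> 'e::zero) \<Rightarrow> nat \<Rightarrow> 'e" where
  "tail_seq K z = (\<lambda>j. if j < K then 0 else z j)"

lemma lpn_nonneg: "0 \<le> lp_seq_norm p z"
  by (simp add: lp_seq_norm_def)

lemma lp_mono:
  fixes z \<zeta> :: "nat \<Rightarrow> 'e::real_normed_vector"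
  assumes p: "0 < p" and "\<zeta> \<in> lp_seq p" and le: "\<And>n. norm (z n) \<le> norm (\<zeta> n)"
  shows "z \<in> lp_seq p \<and> lp_seq_norm p z \<le> lp_seq_norm p \<zeta>"
proof -
  have le2: "norm (z n) powr p \<le> norm (\<zeta> n) powr p" for n
    using le p by (simp add: powr_mono2)
  have s: "summable (\<lambda>n. norm (\<zeta> n) powr p)" using assms by (simp add: lp_seq_def)
  have sz: "summable (\<lambda>n. norm (z n) powr p)"
    by (rule summable_comparison_test'[OF s]) (use le2 in auto)
  have "(\<Sum>n. norm (z n) powr p) \<le> (\<Sum>n. norm (\<zeta> n) powr p)"
    by (rule suminf_le[OF le2 sz s])
  moreover have "0 \<le> (\<Sum>n. norm (z n) powr p)" by (rule suminf_nonneg[OF sz]) simp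
  ultimately show ?thesis using sz p unfolding lp_seq_def lp_seq_norm_def
    by (auto intro!: powr_mono2)
qed

lemma ek_lp:
  fixes v :: "'e::real_normed_vector"
  assumes p: "0 < p"
  shows "ek k v \<in> lp_seq p \<and> lp_seq_norm p (ek k v) = norm v"
proof -
  have eq: "(\<lambda>j. norm (ek k v j) powr p) = (\<lambda>j. if j = k then norm v powr p else 0)"
    by (auto simp: ek_def)
  have "(\<lambda>j. norm (ek k v j) powr p) sums (norm v powr p)"
    unfolding eq using sums_single[of k "\<lambda>_. norm v powr p"] by simp
  then show ?thesis using p unfolding lp_seq_def lp_seq_norm_def
    by (auto simp: sums_iff powr_powr)
qed

lemma comp_le:
  fixes \<zeta> :: "nat \<Rightarrow> 'e::real_normed_vector"
  assumes p: "0 < p" and "\<zeta> \<in> lp_seq p"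
  shows "norm (\<zeta> k) \<le> lp_seq_norm p \<zeta>"
proof -
  have "lp_seq_norm p (ek k (\<zeta> k)) \<le> lp_seq_norm p \<zeta>"
    using lp_mono[OF p assms(2), of "ek k (\<zeta> k)"] by (auto simp: ek_def)
  then show ?thesis using ek_lp[OF p, of k "\<zeta> k"] by simp
qed

lemma cb_norm: "complex_banach smul \<Longrightarrow> norm (smul c v) = cmod c * norm v"
  by (simp add: complex_banach_def)
lemma cb_real: "complex_banach smul \<Longrightarrow> smul (complex_of_real r) v = scaleR r v"
  by (simp add: complex_banach_def)
lemma cb_zero: "complex_banach smul \<Longrightarrow> smul c 0 = 0"
  using cb_norm[of smul c 0] by simp
lemma cb_zero2: "complex_banach smul \<Longrightarrow> smul 0 v = 0"
  using cb_norm[of smul 0 v] by simp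

lemma lp_scale:
  fixes \<zeta> :: "nat \<Rightarrow> 'e::banach"
  assumes p: "0 < p" and cb: "complex_banach smul" and z: "\<zeta> \<in> lp_seq p"
  shows "seq_smul smul c \<zeta> \<in> lp_seq p \<and> lp_seq_norm p (seq_smul smul c \<zeta>) = cmod c * lp_seq_norm p \<zeta>"
proof -
  have s: "summable (\<lambda>n. norm (\<zeta> n) powr p)" using z by (simp add: lp_seq_def)
  have eq: "(\<lambda>n. norm (seq_smul smul c \<zeta> n) powr p) = (\<lambda>n. cmod c powr p * norm (\<zeta> n) powr p)"
    by (auto simp: seq_smul_def cb_norm[OF cb] powr_mult)
  have S0: "0 \<le> (\<Sum>n. norm (\<zeta> n) powr p)" by (rule suminf_nonneg[OF s]) simp
  have "(cmod c powr p * (\<Sum>n. norm (\<zeta> n) powr p)) powr (1/p) = cmod c * (\<Sum>n. norm (\<zeta> n) powr p) powr (1/p)"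
    using p S0 by (simp add: powr_mult powr_powr)
  moreover have "summable (\<lambda>n. norm (seq_smul smul c \<zeta> n) powr p)"
    unfolding eq using s by (rule summable_mult)
  moreover have "(\<Sum>n. norm (seq_smul smul c \<zeta> n) powr p) = cmod c powr p * (\<Sum>n. norm (\<zeta> n) powr p)"
    unfolding eq using s by (rule suminf_mult)
  ultimately show ?thesis unfolding lp_seq_def lp_seq_norm_def by simp
qed

lemma trunc_tail:
  fixes \<zeta> :: "nat \<Rightarrow> 'e::real_normed_vector"
  assumes p: "0 < p" and z: "\<zeta> \<in> lp_seq p"
  shows "trunc_seq K \<zeta> \<in> lp_seq p" "tail_seq K \<zeta> \<in> lp_seq p"
    "\<zeta> = seq_add (trunc_seq K \<zeta>) (tail_seq K \<zeta>)"
    "trunc_seq (Suc K) \<zeta> = seq_add (trunc_seq K \<zeta>) (ek K (\<zeta> K))"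
proof -
  show "trunc_seq K \<zeta> \<in> lp_seq p" using lp_mono[OF p z, of "trunc_seq K \<zeta>"]
    by (auto simp: trunc_seq_def)
  show "tail_seq K \<zeta> \<in> lp_seq p" using lp_mono[OF p z, of "tail_seq K \<zeta>"]
    by (auto simp: tail_seq_def)
  show "\<zeta> = seq_add (trunc_seq K \<zeta>) (tail_seq K \<zeta>)"
    by (auto simp: seq_add_def trunc_seq_def tail_seq_def)
  show "trunc_seq (Suc K) \<zeta> = seq_add (trunc_seq K \<zeta>) (ek K (\<zeta> K))"
    by (auto simp: seq_add_def trunc_seq_def ek_def)
qed

lemma tail_lim:
  fixes \<zeta> :: "nat \<Rightarrow> 'e::real_normed_vector"
  assumes p: "0 < p" and z: "\<zeta> \<in> lp_seq p"
  shows "(\<lambda>K. lp_seq_norm p (tail_seq K \<zeta>)) \<longlonglongrightarrow> 0"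
proof -
  define a where "a = (\<lambda>n. norm (\<zeta> n) powr p)"
  have s: "summable a" using z by (simp add: lp_seq_def a_def)
  have eq: "(\<Sum>n. norm (tail_seq K \<zeta> n) powr p) = suminf a - (\<Sum>i<K. a i)" for K
  proof -
    have "(\<lambda>n. norm (tail_seq K \<zeta> n) powr p) = (\<lambda>n. if n \<in> {..<K} then 0 else a n)"
      using p by (auto simp: tail_seq_def a_def)
    moreover have "(\<lambda>n. if n \<in> {..<K} then 0 else a n) sums (suminf a - (\<Sum>i<K. a i))"
      by (intro sums_If_finite_set'[OF summable_sums[OF s]]) (auto simp: sum_negf)
    ultimately show ?thesis by (simp add: sums_iff)
  qed
  have "(\<lambda>K. suminf a - (\<Sum>i<K. a i)) \<longlonglongrightarrow> suminf a - suminf a"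
    by (intro tendsto_diff tendsto_const summable_LIMSEQ[OF s])
  then have t: "(\<lambda>K. suminf a - (\<Sum>i<K. a i)) \<longlonglongrightarrow> 0" by simp
  have nn: "0 \<le> suminf a - (\<Sum>i<K. a i)" for K
    using sum_le_suminf[OF s, of "{..<K}"] by (auto simp: a_def)
  have "(\<lambda>K. (suminf a - (\<Sum>i<K. a i)) powr (1/p)) \<longlonglongrightarrow> 0"
    by (rule tendsto_zero_powrI[OF t tendsto_const]) (use nn p in auto)
  then show ?thesis unfolding lp_seq_norm_def eq .
qed

lemma dual_bdd:
  assumes "\<eta> \<in> cdual V N add sm" "\<And>z. z \<in> V \<Longrightarrow> 0 \<le> N z"
  shows "bdd_above {cmod (\<eta> u) | u. u \<in> V \<and> N u \<le> 1}"
proof -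
  obtain C where C: "\<forall>u\<in>V. cmod (\<eta> u) \<le> C * N u" using assms(1) by (auto simp: cdual_def)
  have "cmod (\<eta> u) \<le> \<bar>C\<bar>" if "u \<in> V" "N u \<le> 1" for u
  proof -
    have "cmod (\<eta> u) \<le> C * N u" using C that by auto
    also have "\<dots> \<le> \<bar>C\<bar> * N u" using assms(2)[OF that(1)] by (simp add: mult_right_mono)
    also have "\<dots> \<le> \<bar>C\<bar>" using that assms(2)[OF that(1)] by (simp add: mult_left_le)
    finally show ?thesis .
  qed
  then show ?thesis by (auto intro!: bdd_aboveI)
qed

lemma dual_norm_nonneg:
  assumes "\<eta> \<in> cdual V N add sm" "\<And>z. z \<in> V \<Longrightarrow> 0 \<le> N z" "u0 \<in> V" "N u0 \<le> 1"
  shows "0 \<le> dual_norm V N \<eta>"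
proof -
  have "cmod (\<eta> u0) \<le> dual_norm V N \<eta>" unfolding dual_norm_def
    by (rule cSup_upper[OF _ dual_bdd[OF assms(1,2)]]) (use assms in auto)
  then show ?thesis by (meson norm_ge_zero order_trans)
qed

lemma dual_bound:
  assumes eta: "\<eta> \<in> cdual V N add sm" and zV: "z \<in> V" and nn: "\<And>z. z \<in> V \<Longrightarrow> 0 \<le> N z"
    and scV: "\<And>c z. z \<in> V \<Longrightarrow> sm c z \<in> V"
    and scN: "\<And>c z. z \<in> V \<Longrightarrow> N (sm c z) = cmod c * N z"
    and z0: "N z = 0 \<Longrightarrow> sm 0 z = z"
  shows "cmod (\<eta> z) \<le> dual_norm V N \<eta> * N z"
proof (cases "N z = 0")
  case True
  have "\<eta> z = \<eta> (sm 0 z)" using z0[OF True] by simp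
  also have "\<dots> = 0" using eta zV by (simp add: cdual_def)
  finally show ?thesis using True by simp
next
  case False
  then have pos: "0 < N z" using nn[OF zV] by simp
  define z' where "z' = sm (complex_of_real (1 / N z)) z"
  have z'V: "z' \<in> V" using scV zV by (simp add: z'_def)
  have Nz': "N z' = 1" using scN[OF zV] pos by (simp add: z'_def norm_divide)
  have ez': "\<eta> z' = complex_of_real (1 / N z) * \<eta> z" using eta zV by (simp add: cdual_def z'_def)
  have "cmod (\<eta> z') \<le> dual_norm V N \<eta>" unfolding dual_norm_def
    by (rule cSup_upper[OF _ dual_bdd[OF eta nn]]) (use z'V Nz' in auto)
  then have "cmod (\<eta> z) / N z \<le> dual_norm V N \<eta>" using pos
    by (simp add: ez' norm_mult norm_divide)
  then show ?thesis using pos by (simp add: divide_le_eq mult.commute)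
qed

lemma dual_bound_E:
  fixes smul :: "complex \<Rightarrow> 'e::banach \<Rightarrow> 'e"
  assumes cb: "complex_banach smul" and eta: "\<eta> \<in> cdual UNIV norm (+) smul"
  shows "cmod (\<eta> v) \<le> dual_norm UNIV norm \<eta> * norm v"
  by (rule dual_bound[OF eta]) (auto simp: cb_norm[OF cb] cb_zero[OF cb])

lemma dual_nonneg_E:
  fixes smul :: "complex \<Rightarrow> 'e::banach \<Rightarrow> 'e"
  assumes eta: "\<eta> \<in> cdual UNIV norm (+) smul"
  shows "0 \<le> dual_norm UNIV norm \<eta>"
  by (rule dual_norm_nonneg[OF eta, of 0]) auto

lemma lp_zero_iff:
  fixes z :: "nat \<Rightarrow> 'e::real_normed_vector"
  assumes p: "0 < p" and z: "z \<in> lp_seq p" and N0: "lp_seq_norm p z = 0"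
  shows "z n = 0"
  using comp_le[OF p z, of n] N0 by simp

lemma dual_bound_lp:
  fixes smul :: "complex \<Rightarrow> 'e::banach \<Rightarrow> 'e"
  assumes p: "0 < p" and cb: "complex_banach smul"
    and H: "H \<in> cdual (lp_seq p) (lp_seq_norm p) seq_add (seq_smul smul)" and z: "z \<in> lp_seq p"
  shows "cmod (H z) \<le> dual_norm (lp_seq p) (lp_seq_norm p) H * lp_seq_norm p z"
proof (rule dual_bound[OF H z])
  show "0 \<le> lp_seq_norm p z" for z :: "nat \<Rightarrow> 'e" by (rule lpn_nonneg)
  show "seq_smul smul c z \<in> lp_seq p" if "z \<in> lp_seq p" for c z using lp_scale[OF p cb that] by simp
  show "lp_seq_norm p (seq_smul smul c z) = cmod c * lp_seq_norm p z" if "z \<in> lp_seq p" for c z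
    using lp_scale[OF p cb that] by simp
  show "seq_smul smul 0 z = z" if "lp_seq_norm p z = 0"
    using lp_zero_iff[OF p z that] by (auto simp: seq_smul_def cb_zero[OF cb])
qed

lemma dual_nonneg_lp:
  fixes smul :: "complex \<Rightarrow> 'e::banach \<Rightarrow> 'e"
  assumes p: "0 < p" and H: "H \<in> cdual (lp_seq p) (lp_seq_norm p) seq_add (seq_smul smul)"
  shows "0 \<le> dual_norm (lp_seq p) (lp_seq_norm p) H"
proof (rule dual_norm_nonneg[OF H lpn_nonneg, of "ek 0 (0::'e)"])
  show "ek 0 (0::'e) \<in> lp_seq p" using ek_lp[OF p] by blast
  show "lp_seq_norm p (ek 0 (0::'e)) \<le> 1" using ek_lp[OF p, of 0 "0::'e"] by simp
qed

lemma trunc_sum: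
  fixes smul :: "complex \<Rightarrow> 'e::banach \<Rightarrow> 'e"
  assumes p: "0 < p" and cb: "complex_banach smul"
    and H: "H \<in> cdual (lp_seq p) (lp_seq_norm p) seq_add (seq_smul smul)" and z: "z \<in> lp_seq p"
  shows "H (trunc_seq K z) = (\<Sum>k<K. H (ek k (z k)))"
proof (induction K)
  case 0
  have t0: "trunc_seq 0 z \<in> lp_seq p" using trunc_tail[OF p z] by blast
  have "trunc_seq 0 z = seq_smul smul 0 (trunc_seq 0 z)"
    by (auto simp: trunc_seq_def seq_smul_def cb_zero[OF cb])
  then have "H (trunc_seq 0 z) = H (seq_smul smul 0 (trunc_seq 0 z))" by simp
  also have "\<dots> = 0" using H t0 by (simp add: cdual_def)
  finally show ?case by simp
next
  case (Suc K)
  have "H (trunc_seq (Suc K) z) = H (seq_add (trunc_seq K z) (ek K (z K)))"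
    using trunc_tail(4)[OF p z] by simp
  also have "\<dots> = H (trunc_seq K z) + H (ek K (z K))"
  proof -
    have a: "trunc_seq K z \<in> lp_seq p" using trunc_tail(1)[OF p z] by blast
    have b: "ek K (z K) \<in> lp_seq p" using ek_lp[OF p] by blast
    show ?thesis using H a b unfolding cdual_def by simp
  qed
  finally show ?case using Suc by simp
qed

lemma decomp:
  fixes smul :: "complex \<Rightarrow> 'e::banach \<Rightarrow> 'e"
  assumes p: "0 < p" and cb: "complex_banach smul"
    and H: "H \<in> cdual (lp_seq p) (lp_seq_norm p) seq_add (seq_smul smul)" and z: "z \<in> lp_seq p"
  shows "(\<lambda>k. H (ek k (z k))) sums H z"
proof -
  let ?D = "dual_norm (lp_seq p) (lp_seq_norm p) H"
  have split: "H z = H (trunc_seq K z) + H (tail_seq K z)" for K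
  proof -
    have "H z = H (seq_add (trunc_seq K z) (tail_seq K z))" using trunc_tail(3)[OF p z] by metis
    also have "\<dots> = H (trunc_seq K z) + H (tail_seq K z)"
      using H trunc_tail(1,2)[OF p z] by (simp add: cdual_def)
    finally show ?thesis .
  qed
  have "(\<lambda>K. ?D * lp_seq_norm p (tail_seq K z)) \<longlonglongrightarrow> ?D * 0"
    by (intro tendsto_mult tendsto_const tail_lim[OF p z])
  moreover have "\<forall>\<^sub>F K in sequentially. norm (H (tail_seq K z)) \<le> ?D * lp_seq_norm p (tail_seq K z)"
    by (intro always_eventually allI dual_bound_lp[OF p cb H] trunc_tail(2)[OF p z])
  ultimately have "(\<lambda>K. H (tail_seq K z)) \<longlonglongrightarrow> 0"
    using Lim_null_comparison by force
  then have "(\<lambda>K. H z - H (tail_seq K z)) \<longlonglongrightarrow> H z - 0"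
    by (intro tendsto_diff tendsto_const)
  moreover have "H z - H (tail_seq K z) = (\<Sum>k<K. H (ek k (z k)))" for K
    using split[of K] trunc_sum[OF p cb H z, of K] by (simp add: algebra_simps)
  ultimately show ?thesis unfolding sums_def by simp
qed

lemma sup_choice:
  fixes a :: "nat \<Rightarrow> real" and \<phi> :: "nat \<Rightarrow> 'w \<Rightarrow> real"
  assumes W: "W \<noteq> {}" and bdd: "\<And>k. bdd_above (\<phi> k ` W)" and a: "\<And>k. 0 \<le> a k"
    and H: "\<And>w. (\<forall>k<K. w k \<in> W) \<Longrightarrow> (\<Sum>k<K. a k * \<phi> k (w k)) \<le> B"
  shows "(\<Sum>k<K. a k * Sup (\<phi> k ` W)) \<le> B"
  using H
proof (induction K arbitrary: B)
  case 0
  then show ?case by simp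
next
  case (Suc K)
  let ?S = "Sup (\<phi> K ` W)"
  have eqs: "(\<Sum>k<Suc K. a k * \<phi> k ((w(K:=t)) k)) = (\<Sum>k<K. a k * \<phi> k (w k)) + a K * \<phi> K t"
    for w :: "nat \<Rightarrow> 'w" and t
  proof -
    have "(\<Sum>k<K. a k * \<phi> k ((w(K:=t)) k)) = (\<Sum>k<K. a k * \<phi> k (w k))"
      by (intro sum.cong) auto
    then show ?thesis by simp
  qed
  have pr: "(\<Sum>k<K. a k * \<phi> k (w k)) + a K * \<phi> K t \<le> B"
    if "\<forall>k<K. w k \<in> W" "t \<in> W" for w t
  proof -
    have "\<forall>k<Suc K. (w(K:=t)) k \<in> W" using that by (auto simp: less_Suc_eq)
    then have "(\<Sum>k<Suc K. a k * \<phi> k ((w(K:=t)) k)) \<le> B" by (rule Suc.prems)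
    then show ?thesis by (simp only: eqs)
  qed
  have "(\<Sum>k<K. a k * Sup (\<phi> k ` W)) \<le> B - a K * ?S"
  proof (rule Suc.IH)
    fix w assume w: "\<forall>k<K. w k \<in> W"
    show "(\<Sum>k<K. a k * \<phi> k (w k)) \<le> B - a K * ?S"
    proof (cases "a K = 0")
      case True
      obtain t where t: "t \<in> W" using W by auto
      show ?thesis using pr[OF w t] True by simp
    next
      case False
      hence pos: "0 < a K" using a[of K] by simp
      have "?S \<le> (B - (\<Sum>k<K. a k * \<phi> k (w k))) / a K"
      proof (rule cSup_least)
        show "\<phi> K ` W \<noteq> {}" using W by simp
        fix y assume "y \<in> \<phi> K ` W"
        then obtain t where t: "t \<in> W" "y = \<phi> K t" by auto
        show "y \<le> (B - (\<Sum>k<K. a k * \<phi> k (w k))) / a K"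
          using pr[OF w t(1)] pos t(2) by (simp add: pos_le_divide_eq mult.commute)
      qed
      then show ?thesis using pos by (simp add: pos_le_divide_eq mult.commute)
    qed
  qed
  then show ?case by simp
qed

lemma ek_add: fixes u w :: "'e::monoid_add" shows "ek k (u + w) = seq_add (ek k u) (ek k w)"
  by (auto simp: ek_def seq_add_def fun_eq_iff)

lemma ek_smul: "complex_banach smul \<Longrightarrow> ek k (smul c u) = seq_smul smul c (ek k u)"
  by (auto simp: ek_def seq_smul_def cb_zero)

lemma ek_dual:
  fixes smul :: "complex \<Rightarrow> 'e::banach \<Rightarrow> 'e"
  assumes p: "0 < p" and cb: "complex_banach smul"
    and H: "H \<in> cdual (lp_seq p) (lp_seq_norm p) seq_add (seq_smul smul)"
  shows "(\<lambda>v. H (ek k v)) \<in> cdual UNIV norm (+) smul"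
    and "cmod (H (ek k v)) \<le> dual_norm (lp_seq p) (lp_seq_norm p) H * norm v"
proof -
  have ekl: "ek k u \<in> lp_seq p" for u :: 'e using ek_lp[OF p] by blast
  show b: "cmod (H (ek k v)) \<le> dual_norm (lp_seq p) (lp_seq_norm p) H * norm v" for v
    using dual_bound_lp[OF p cb H ekl[of v]] ek_lp[OF p, of k v] by simp
  have "H (ek k (u + w)) = H (ek k u) + H (ek k w)" for u w
    unfolding ek_add using H ekl unfolding cdual_def by simp
  moreover have "H (ek k (smul c u)) = c * H (ek k u)" for c u
    unfolding ek_smul[OF cb] using H ekl unfolding cdual_def by simp
  ultimately show "(\<lambda>v. H (ek k v)) \<in> cdual UNIV norm (+) smul"
    unfolding cdual_def using b by blast
qed

lemma dual_norm_E_eq: "dual_norm UNIV norm \<eta> = Sup ((\<lambda>u. cmod (\<eta> u)) ` {u. norm u \<le> 1})"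
  unfolding dual_norm_def by (rule arg_cong[where f = Sup]) auto

lemma sgn_trick: "cnj (sgn h) * h = complex_of_real (cmod h)"
proof (cases "h = 0")
  case False
  have "cnj (sgn h) * h = cnj h * h / complex_of_real (cmod h)"
    by (simp add: sgn_div_norm divide_inverse scaleR_conv_of_real)
  also have "cnj h * h = complex_of_real (cmod h) ^ 2"
  proof -
    have "cnj h * h = h * cnj h" by (rule mult.commute)
    also have "\<dots> = complex_of_real ((cmod h)\<^sup>2)" by (rule complex_norm_square[symmetric])
    also have "\<dots> = complex_of_real (cmod h) ^ 2" by (rule of_real_power)
    finally show ?thesis .
  qed
  finally show ?thesis using False by (simp add: power2_eq_square)
qed simp

lemma fin_cost:
  fixes smul :: "complex \<Rightarrow> 'e::banach \<Rightarrow> 'e" and z :: "nat \<Rightarrow> 'e"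
  assumes p: "0 < p" and cb: "complex_banach smul"
    and H: "H \<in> cdual (lp_seq p) (lp_seq_norm p) seq_add (seq_smul smul)" and z: "z \<in> lp_seq p"
  shows "(\<Sum>k<K. norm (z k) * dual_norm UNIV norm (\<lambda>v. H (ek k v)))
          \<le> dual_norm (lp_seq p) (lp_seq_norm p) H * lp_seq_norm p z"
proof -
  let ?D = "dual_norm (lp_seq p) (lp_seq_norm p) H"
  have D0: "0 \<le> ?D" by (rule dual_nonneg_lp[OF p H])
  let ?W = "{u::'e. norm u \<le> 1}"
  have "(\<Sum>k<K. norm (z k) * Sup ((\<lambda>u. cmod (H (ek k u))) ` ?W)) \<le> ?D * lp_seq_norm p z"
  proof (rule sup_choice)
    show "?W \<noteq> {}" by (auto intro: exI[of _ 0])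
    show "bdd_above ((\<lambda>u. cmod (H (ek k u))) ` ?W)" for k
    proof (rule bdd_aboveI2)
      fix u :: 'e assume "u \<in> ?W"
      then have "norm u \<le> 1" by simp
      then have "?D * norm u \<le> ?D" using D0 by (rule mult_left_le)
      then show "cmod (H (ek k u)) \<le> ?D"
        using ek_dual(2)[OF p cb H, of k u] by linarith
    qed
    show "0 \<le> norm (z k)" for k by simp
    fix w assume w: "\<forall>k<K. w k \<in> ?W"
    define c where "c j = cnj (sgn (H (ek j (w j)))) * complex_of_real (norm (z j))" for j
    define y where "y j = (if j < K then smul (c j) (w j) else 0)" for j
    have ny: "norm (y j) \<le> norm (z j)" for j
    proof (cases "j < K")
      case True
      have "norm (y j) = cmod (sgn (H (ek j (w j)))) * norm (z j) * norm (w j)"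
        using True by (simp add: y_def c_def cb_norm[OF cb] norm_mult)
      also have "\<dots> \<le> 1 * norm (z j) * 1"
        using w True by (intro mult_mono) (auto simp: norm_sgn)
      finally show ?thesis by simp
    qed (simp add: y_def)
    have yl: "y \<in> lp_seq p" and Ny: "lp_seq_norm p y \<le> lp_seq_norm p z"
      using lp_mono[OF p z ny] by auto
    have ty: "trunc_seq K y = y" by (auto simp: trunc_seq_def y_def)
    have trm: "H (ek k (y k)) = complex_of_real (norm (z k) * cmod (H (ek k (w k))))" if "k < K" for k
    proof -
      have "H (ek k (y k)) = H (seq_smul smul (c k) (ek k (w k)))"
        using that by (simp add: y_def ek_smul[OF cb])
      also have "\<dots> = c k * H (ek k (w k))"
        using H ek_lp[OF p] unfolding cdual_def by blast
      also have "\<dots> = complex_of_real (norm (z k)) * (cnj (sgn (H (ek k (w k)))) * H (ek k (w k)))"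
        by (simp add: c_def)
      also have "\<dots> = complex_of_real (norm (z k) * cmod (H (ek k (w k))))"
        by (simp add: sgn_trick)
      finally show ?thesis .
    qed
    have "H y = (\<Sum>k<K. H (ek k (y k)))" using trunc_sum[OF p cb H yl, of K] ty by simp
    also have "\<dots> = complex_of_real (\<Sum>k<K. norm (z k) * cmod (H (ek k (w k))))"
      by (simp add: trm)
    finally have Hy: "H y = complex_of_real (\<Sum>k<K. norm (z k) * cmod (H (ek k (w k))))" .
    have S0: "0 \<le> (\<Sum>k<K. norm (z k) * cmod (H (ek k (w k))))" by (intro sum_nonneg) simp
    have "(\<Sum>k<K. norm (z k) * cmod (H (ek k (w k)))) = cmod (H y)"
      unfolding Hy norm_of_real using S0 by simp
    also have "\<dots> \<le> ?D * lp_seq_norm p y" by (rule dual_bound_lp[OF p cb H yl])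
    also have "\<dots> \<le> ?D * lp_seq_norm p z" using Ny D0 by (simp add: mult_left_mono)
    finally show "(\<Sum>k<K. norm (z k) * cmod (H (ek k (w k)))) \<le> ?D * lp_seq_norm p z" .
  qed
  then show ?thesis by (simp add: dual_norm_E_eq)
qed

lemma flatten:
  fixes f :: "nat \<times> nat \<Rightarrow> complex" and g :: "nat \<times> nat \<Rightarrow> real" and b :: "nat \<Rightarrow> real"
    and s :: "nat \<Rightarrow> complex"
  assumes fg: "\<And>q. norm (f q) \<le> g q" and g0: "\<And>q. 0 \<le> g q"
    and gb: "\<And>n K. (\<Sum>k<K. g (n,k)) \<le> b n" and sb: "summable b"
    and fs: "\<And>n. (\<lambda>k. f (n,k)) sums s n"
  shows "summable (\<lambda>m. g (prod_decode m))" "(\<Sum>m. g (prod_decode m)) \<le> (\<Sum>n. b n)"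
    "(\<lambda>m. f (prod_decode m)) sums (\<Sum>n. s n)"
proof -
  have b0: "0 \<le> b n" for n using gb[of n 0] by simp
  have part: "(\<Sum>m<M. g (prod_decode m)) \<le> (\<Sum>n. b n)" for M
  proof -
    have sub: "prod_decode ` {..<M} \<subseteq> {..<M} \<times> {..<M}"
    proof
      fix q assume "q \<in> prod_decode ` {..<M}"
      then obtain m where m: "m < M" "q = prod_decode m" by auto
      obtain i j where q: "q = (i, j)" by (cases q)
      have "prod_encode (i, j) = m" using m q by (metis prod_decode_inverse)
      then have "i \<le> m" "j \<le> m" using le_prod_encode_1[of i j] le_prod_encode_2[of j i] by auto
      then show "q \<in> {..<M} \<times> {..<M}" using m(1) q by auto
    qed
    have inj: "inj_on prod_decode {..<M}" by (rule inj_prod_decode)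
    have "(\<Sum>m<M. g (prod_decode m)) = (\<Sum>q\<in>prod_decode ` {..<M}. g q)"
      by (simp add: sum.reindex[OF inj])
    also have "\<dots> \<le> (\<Sum>q\<in>{..<M} \<times> {..<M}. g q)" by (rule sum_mono2) (auto simp: g0 sub)
    also have "\<dots> = (\<Sum>n<M. \<Sum>k<M. g (n,k))" by (simp add: sum.cartesian_product)
    also have "\<dots> \<le> (\<Sum>n<M. b n)" by (intro sum_mono gb)
    also have "\<dots> \<le> (\<Sum>n. b n)" by (rule sum_le_suminf[OF sb]) (auto simp: b0)
    finally show ?thesis .
  qed
  show sg: "summable (\<lambda>m. g (prod_decode m))" by (rule summableI_nonneg_bounded[OF g0 part])
  show "(\<Sum>m. g (prod_decode m)) \<le> (\<Sum>n. b n)" by (rule suminf_le_const[OF sg part])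
  let ?F = "\<lambda>m. f (prod_decode m)"
  have nF: "summable (\<lambda>m. norm (?F m))"
    by (rule summable_comparison_test'[OF sg]) (auto simp: fg)
  have hF: "(?F has_sum (\<Sum>m. ?F m)) UNIV"
    by (rule norm_summable_imp_has_sum[OF nF summable_sums[OF summable_norm_cancel[OF nF]]])
  have hf: "(f has_sum (\<Sum>m. ?F m)) UNIV"
    using hF has_sum_reindex_bij_betw[OF bij_prod_decode, of f] by simp
  have hf': "(f has_sum (\<Sum>m. ?F m)) (Sigma UNIV (\<lambda>_. UNIV))" using hf by simp
  have hs: "((\<lambda>k. f (n,k)) has_sum s n) UNIV" for n
  proof -
    have "summable (\<lambda>k. g (n,k))" by (rule summableI_nonneg_bounded[OF g0 gb])
    then have "summable (\<lambda>k. norm (f (n,k)))"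
      by (rule summable_comparison_test') (auto simp: fg)
    then show ?thesis by (rule norm_summable_imp_has_sum[OF _ fs])
  qed
  have "(s has_sum (\<Sum>m. ?F m)) UNIV" by (rule has_sum_Sigma'[OF hf' hs])
  then have "s sums (\<Sum>m. ?F m)" by (rule has_sum_imp_sums)
  then have "(\<Sum>n. s n) = (\<Sum>m. ?F m)" by (simp add: sums_iff)
  then show "?F sums (\<Sum>n. s n)" using summable_sums[OF summable_norm_cancel[OF nF]] by simp
qed

lemma dir1:
  fixes smul :: "complex \<Rightarrow> 'e::banach \<Rightarrow> 'e" and \<pi> :: "'g \<Rightarrow> 'e \<Rightarrow> 'e"
  assumes p: "0 < p" and cb: "complex_banach smul"
    and r: "coef_repr G \<pi> UNIV norm (+) smul u \<xi> \<eta>"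
  shows "coef_repr G (amplify \<pi>) (lp_seq p) (lp_seq_norm p) seq_add (seq_smul smul) u
            (\<lambda>n. ek 0 (\<xi> n)) (\<lambda>n \<zeta>. \<eta> n (\<zeta> 0))
       \<and> (\<Sum>n. lp_seq_norm p (ek 0 (\<xi> n)) * dual_norm (lp_seq p) (lp_seq_norm p) (\<lambda>\<zeta>. \<eta> n (\<zeta> 0)))
          = (\<Sum>n. norm (\<xi> n) * dual_norm UNIV norm (\<eta> n))"
proof -
  have eta: "\<eta> n \<in> cdual UNIV norm (+) smul" for n using r by (simp add: coef_repr_def)
  have dn: "dual_norm (lp_seq p) (lp_seq_norm p) (\<lambda>\<zeta>. \<eta> n (\<zeta> 0)) = dual_norm UNIV norm (\<eta> n)" for n
    unfolding dual_norm_def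
  proof (rule arg_cong[where f = Sup])
    show "{cmod (\<eta> n (\<zeta> 0)) |\<zeta>. \<zeta> \<in> lp_seq p \<and> lp_seq_norm p \<zeta> \<le> 1} =
          {cmod (\<eta> n u) |u. u \<in> UNIV \<and> norm u \<le> 1}"
    proof (intro equalityI subsetI)
      fix y assume "y \<in> {cmod (\<eta> n (\<zeta> 0)) |\<zeta>. \<zeta> \<in> lp_seq p \<and> lp_seq_norm p \<zeta> \<le> 1}"
      then obtain \<zeta> where z: "y = cmod (\<eta> n (\<zeta> 0))" "\<zeta> \<in> lp_seq p" "lp_seq_norm p \<zeta> \<le> 1" by auto
      have "norm (\<zeta> 0) \<le> 1" using comp_le[OF p z(2), of 0] z(3) by simp
      then show "y \<in> {cmod (\<eta> n u) |u. u \<in> UNIV \<and> norm u \<le> 1}" using z(1) by auto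
    next
      fix y assume "y \<in> {cmod (\<eta> n u) |u. u \<in> UNIV \<and> norm u \<le> 1}"
      then obtain v where v: "y = cmod (\<eta> n v)" "norm v \<le> 1" by auto
      have "ek 0 v \<in> lp_seq p" "lp_seq_norm p (ek 0 v) \<le> 1" "ek 0 v 0 = v"
        using ek_lp[OF p, of 0 v] v(2) by (auto simp: ek_def)
      then show "y \<in> {cmod (\<eta> n (\<zeta> 0)) |\<zeta>. \<zeta> \<in> lp_seq p \<and> lp_seq_norm p \<zeta> \<le> 1}"
        using v(1) by (metis (mono_tags, lifting) mem_Collect_eq)
    qed
  qed
  have terms: "lp_seq_norm p (ek 0 (\<xi> n)) * dual_norm (lp_seq p) (lp_seq_norm p) (\<lambda>\<zeta>. \<eta> n (\<zeta> 0))
      = norm (\<xi> n) * dual_norm UNIV norm (\<eta> n)" for n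
    using ek_lp[OF p, of 0 "\<xi> n"] dn[of n] by simp
  have cd: "(\<lambda>\<zeta>. \<eta> n (\<zeta> 0)) \<in> cdual (lp_seq p) (lp_seq_norm p) seq_add (seq_smul smul)" for n
  proof -
    have "cmod (\<eta> n (\<zeta> 0)) \<le> dual_norm UNIV norm (\<eta> n) * lp_seq_norm p \<zeta>" if "\<zeta> \<in> lp_seq p" for \<zeta>
    proof -
      have "cmod (\<eta> n (\<zeta> 0)) \<le> dual_norm UNIV norm (\<eta> n) * norm (\<zeta> 0)"
        by (rule dual_bound_E[OF cb eta])
      also have "\<dots> \<le> dual_norm UNIV norm (\<eta> n) * lp_seq_norm p \<zeta>"
        using comp_le[OF p that, of 0] dual_nonneg_E[OF eta] by (simp add: mult_left_mono)
      finally show ?thesis .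
    qed
    then show ?thesis using eta[of n]
      unfolding cdual_def seq_add_def seq_smul_def by auto
  qed
  have uu: "(\<lambda>x\<in>carrier G. \<Sum>n. \<eta> n (\<pi> x (\<xi> n)))
      = (\<lambda>x\<in>carrier G. \<Sum>n. \<eta> n (amplify \<pi> x (ek 0 (\<xi> n)) 0))"
    by (simp add: amplify_def ek_def)
  show ?thesis using r uu unfolding coef_repr_def
    by (auto simp only: terms dn cd ek_lp[OF p] simp_thms)
qed

lemma dir2:
  fixes smul :: "complex \<Rightarrow> 'e::banach \<Rightarrow> 'e" and \<pi> :: "'g \<Rightarrow> 'e \<Rightarrow> 'e"
  assumes p: "0 < p" and cb: "complex_banach smul" and rep: "isometric_rep G T smul \<pi>"
    and r: "coef_repr G (amplify \<pi>) (lp_seq p) (lp_seq_norm p) seq_add (seq_smul smul) u \<Xi> H"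
  shows "\<exists>\<xi> \<eta>. coef_repr G \<pi> UNIV norm (+) smul u \<xi> \<eta> \<and>
     (\<Sum>m. norm (\<xi> m) * dual_norm UNIV norm (\<eta> m))
       \<le> (\<Sum>n. lp_seq_norm p (\<Xi> n) * dual_norm (lp_seq p) (lp_seq_norm p) (H n))"
proof -
  have Xi: "\<Xi> n \<in> lp_seq p" and Hn: "H n \<in> cdual (lp_seq p) (lp_seq_norm p) seq_add (seq_smul smul)"
    and sb: "summable (\<lambda>n. lp_seq_norm p (\<Xi> n) * dual_norm (lp_seq p) (lp_seq_norm p) (H n))"
    and ueq: "u = restrict (\<lambda>x. \<Sum>n. H n (amplify \<pi> x (\<Xi> n))) (carrier G)" for n
    using r by (auto simp: coef_repr_def)
  have iso: "norm (\<pi> x v) = norm v" if "x \<in> carrier G" for x v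
    using rep that by (simp add: isometric_rep_def)
  define g where "g q = norm (\<Xi> (fst q) (snd q)) * dual_norm UNIV norm (\<lambda>v. H (fst q) (ek (snd q) v))"
    for q :: "nat \<times> nat"
  define b where "b n = lp_seq_norm p (\<Xi> n) * dual_norm (lp_seq p) (lp_seq_norm p) (H n)" for n
  define \<xi>' where "\<xi>' m = \<Xi> (fst (prod_decode m)) (snd (prod_decode m))" for m
  define \<eta>' where "\<eta>' m = (\<lambda>v. H (fst (prod_decode m)) (ek (snd (prod_decode m)) v))" for m
  have ekd: "(\<lambda>v. H n (ek k v)) \<in> cdual UNIV norm (+) smul" for n k by (rule ek_dual(1)[OF p cb Hn])
  have g0: "0 \<le> g q" for q unfolding g_def using dual_nonneg_E[OF ekd] by simp
  have gb: "(\<Sum>k<K. g (n,k)) \<le> b n" for n K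
    unfolding g_def b_def using fin_cost[OF p cb Hn[of n] Xi[of n], of K] by (simp add: mult.commute)
  have sbb: "summable b" unfolding b_def[abs_def] using sb .
  define f where "f x q = H (fst q) (ek (snd q) (\<pi> x (\<Xi> (fst q) (snd q))))" for x q
  have fsum: "(\<lambda>m. f x (prod_decode m)) sums (\<Sum>n. H n (amplify \<pi> x (\<Xi> n)))" if x: "x \<in> carrier G" for x
  proof (rule flatten(3)[OF _ g0 gb sbb])
    show "norm (f x q) \<le> g q" for q
      unfolding f_def g_def using dual_bound_E[OF cb ekd, of "fst q" "snd q" "\<pi> x (\<Xi> (fst q) (snd q))"]
      by (simp add: iso[OF x] mult.commute)
    show "(\<lambda>k. f x (n, k)) sums H n (amplify \<pi> x (\<Xi> n))" for n
    proof -
      have "amplify \<pi> x (\<Xi> n) \<in> lp_seq p"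
        using lp_mono[OF p Xi[of n], of "amplify \<pi> x (\<Xi> n)"] by (simp add: amplify_def iso[OF x])
      from decomp[OF p cb Hn this] show ?thesis by (simp add: f_def amplify_def)
    qed
  qed
  have fe: "f x (prod_decode m) = \<eta>' m (\<pi> x (\<xi>' m))" for x m by (simp add: f_def \<eta>'_def \<xi>'_def)
  have ge: "g (prod_decode m) = norm (\<xi>' m) * dual_norm UNIV norm (\<eta>' m)" for m
    by (simp add: g_def \<eta>'_def \<xi>'_def)
  have sg: "summable (\<lambda>m. g (prod_decode m))" and leg: "(\<Sum>m. g (prod_decode m)) \<le> (\<Sum>n. b n)"
    using flatten(1,2)[of "\<lambda>_. 0" g b "\<lambda>_. 0", OF _ g0 gb sbb] g0 by auto
  have "coef_repr G \<pi> UNIV norm (+) smul u \<xi>' \<eta>'"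
    unfolding coef_repr_def
  proof (intro conjI allI)
    show "\<xi>' n \<in> UNIV" for n by simp
    show "\<eta>' n \<in> cdual UNIV norm (+) smul" for n unfolding \<eta>'_def by (rule ekd)
    show "summable (\<lambda>n. norm (\<xi>' n) * dual_norm UNIV norm (\<eta>' n))" using sg by (simp add: ge)
    show "u = (\<lambda>x\<in>carrier G. \<Sum>n. \<eta>' n (\<pi> x (\<xi>' n)))"
      unfolding ueq
    proof (rule restrict_ext)
      fix x assume x: "x \<in> carrier G"
      show "(\<Sum>n. H n (amplify \<pi> x (\<Xi> n))) = (\<Sum>n. \<eta>' n (\<pi> x (\<xi>' n)))"
        using fsum[OF x] by (simp add: fe sums_iff)
    qed
  qed
  moreover have "(\<Sum>m. norm (\<xi>' m) * dual_norm UNIV norm (\<eta>' m)) \<le> (\<Sum>n. b n)"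
    using leg by (simp add: ge)
  ultimately show ?thesis unfolding b_def by blast
qed

theorem proposition3:
  fixes G :: "('g, 'b) monoid_scheme" and T :: "'g topology"
    and p :: real
    and smul :: "complex \<Rightarrow> 'e::banach \<Rightarrow> 'e"
    and \<pi> :: "'g \<Rightarrow> 'e \<Rightarrow> 'e"
  assumes "lc_group G T"
    and "1 < p"
    and "QSLp_space TYPE('m) p smul"
    and "isometric_rep G T smul \<pi>"
  shows "coef_space G \<pi> UNIV norm (+) smul
           = coef_space G (amplify \<pi>) (lp_seq p) (lp_seq_norm p) seq_add (seq_smul smul)
         \<and> (\<forall>u \<in> coef_space G \<pi> UNIV norm (+) smul.
           coef_norm G \<pi> UNIV norm (+) smul u
           = coef_norm G (amplify \<pi>) (lp_seq p) (lp_seq_norm p) seq_add (seq_smul smul) u)"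
proof -
  have p: "0 < p" using assms(2) by simp
  have cb: "complex_banach smul" using assms(3) by (simp add: QSLp_space_def)
  note rep = assms(4)
  have A_sub: "u \<in> coef_space G (amplify \<pi>) (lp_seq p) (lp_seq_norm p) seq_add (seq_smul smul)"
    if "u \<in> coef_space G \<pi> UNIV norm (+) smul" for u
    using that dir1[OF p cb] unfolding coef_space_def by blast
  have B_sub: "u \<in> coef_space G \<pi> UNIV norm (+) smul"
    if "u \<in> coef_space G (amplify \<pi>) (lp_seq p) (lp_seq_norm p) seq_add (seq_smul smul)" for u
    using that dir2[OF p cb rep] unfolding coef_space_def by blast
  have eqs: "coef_space G \<pi> UNIV norm (+) smul
           = coef_space G (amplify \<pi>) (lp_seq p) (lp_seq_norm p) seq_add (seq_smul smul)"
    using A_sub B_sub by blast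
  have nrm: "coef_norm G \<pi> UNIV norm (+) smul u
           = coef_norm G (amplify \<pi>) (lp_seq p) (lp_seq_norm p) seq_add (seq_smul smul) u"
    if u: "u \<in> coef_space G \<pi> UNIV norm (+) smul" for u
  proof -
    define SA where "SA = {(\<Sum>n. norm (\<xi> n) * dual_norm UNIV norm (\<eta> n)) | \<xi> \<eta>.
        coef_repr G \<pi> UNIV norm (+) smul u \<xi> \<eta>}"
    define SB where "SB = {(\<Sum>n. lp_seq_norm p (\<xi> n) * dual_norm (lp_seq p) (lp_seq_norm p) (\<eta> n)) | \<xi> \<eta>.
        coef_repr G (amplify \<pi>) (lp_seq p) (lp_seq_norm p) seq_add (seq_smul smul) u \<xi> \<eta>}"
    have SAne: "SA \<noteq> {}" using u unfolding SA_def coef_space_def by blast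
    have SBne: "SB \<noteq> {}" using A_sub[OF u] unfolding SB_def coef_space_def by blast
    have SAb: "bdd_below SA"
    proof (rule bdd_belowI)
      fix a assume "a \<in> SA"
      then obtain \<xi> \<eta> where a: "a = (\<Sum>n. norm (\<xi> n) * dual_norm UNIV norm (\<eta> n))"
        and r: "coef_repr G \<pi> UNIV norm (+) smul u \<xi> \<eta>" unfolding SA_def by blast
      have "0 \<le> norm (\<xi> n) * dual_norm UNIV norm (\<eta> n)" for n
        using r dual_nonneg_E[of "\<eta> n" smul] by (simp add: coef_repr_def)
      then show "0 \<le> a" unfolding a using r by (intro suminf_nonneg) (auto simp: coef_repr_def)
    qed
    have SBb: "bdd_below SB"
    proof (rule bdd_belowI)
      fix a assume "a \<in> SB"
      then obtain \<xi> \<eta> where a: "a = (\<Sum>n. lp_seq_norm p (\<xi> n) * dual_norm (lp_seq p) (lp_seq_norm p) (\<eta> n))"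
        and r: "coef_repr G (amplify \<pi>) (lp_seq p) (lp_seq_norm p) seq_add (seq_smul smul) u \<xi> \<eta>"
        unfolding SB_def by blast
      have "0 \<le> lp_seq_norm p (\<xi> n) * dual_norm (lp_seq p) (lp_seq_norm p) (\<eta> n)" for n
        using r dual_nonneg_lp[OF p, of "\<eta> n" smul] lpn_nonneg[of p "\<xi> n"] by (simp add: coef_repr_def)
      then show "0 \<le> a" unfolding a using r by (intro suminf_nonneg) (auto simp: coef_repr_def)
    qed
    have "Inf SA \<le> Inf SB"
    proof (rule cInf_mono[OF SBne SAb])
      fix b assume "b \<in> SB"
      then obtain \<xi> \<eta> where b: "b = (\<Sum>n. lp_seq_norm p (\<xi> n) * dual_norm (lp_seq p) (lp_seq_norm p) (\<eta> n))"
        and r: "coef_repr G (amplify \<pi>) (lp_seq p) (lp_seq_norm p) seq_add (seq_smul smul) u \<xi> \<eta>"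
        unfolding SB_def by blast
      from dir2[OF p cb rep r] show "\<exists>a\<in>SA. a \<le> b" unfolding SA_def b by blast
    qed
    moreover have "Inf SB \<le> Inf SA"
    proof (rule cInf_mono[OF SAne SBb])
      fix a assume "a \<in> SA"
      then obtain \<xi> \<eta> where a: "a = (\<Sum>n. norm (\<xi> n) * dual_norm UNIV norm (\<eta> n))"
        and r: "coef_repr G \<pi> UNIV norm (+) smul u \<xi> \<eta>" unfolding SA_def by blast
      from dir1[OF p cb r] have "a \<in> SB" unfolding SB_def a
        by (intro CollectI exI[of _ "\<lambda>n. ek 0 (\<xi> n)"] exI[of _ "\<lambda>n \<zeta>. \<eta> n (\<zeta> 0)"]) simp
      then show "\<exists>b\<in>SB. b \<le> a" by blast
    qed
    ultimately show ?thesis unfolding coef_norm_def SA_def SB_def by simp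
  qed
  show ?thesis using eqs nrm by blast
qed

end
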